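(* Let $q$ be a prime power. For $1\leq i\leq k$, let $b_i,\delta\in\mathbb{F}_{q^2}$ and let $s_i$ be positive integers. Let $$P_1(x)=\sum_{i=1}^{k}b_i(x^q+x+\delta)^{s_i}-x,\qquad P_2(x)=\sum_{i=1}^{k}b_i^q(x^q+x+\delta)^{qs_i}-x .$$ Then $P_1(x)$ is a permutation polynomial of $\mathbb{F}_{q^2}$ if and only if $P_2(x)$ is a permutation polynomial of $\mathbb{F}_{q^2}$. Moreover, if $P_1(x)$ permutes $\mathbb{F}_{q^2}$, then $$P_1^{-1}(x)+x=\left(P_2^{-1}(x)+x\right)^q,$$ where $P_1^{-1}(x)$ and $P_2^{-1}(x)$ are the compositional inverses of $P_1(x)$ and $P_2(x)$ over $\mathbb{F}_{q^2}$.
   Context: A polynomial $f\in\mathbb{F}_{Q}[x]$ is a permutation polynomial of $\mathbb{F}_Q$ if the map $c\mapsto f(c)$ is a bijection of $\mathbb{F}_Q$. Its compositional inverse $f^{-1}(x)$ is the unique polynomial with $f(f^{-1}(x))\equiv f^{-1}(f(x))\equiv x \pmod{x^Q-x}$; identities between polynomials are understood as identities of the induced functions on $\mathbb{F}_Q$ (i.e. modulo $x^Q-x$). *)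

theory Defs
  imports "HOL-Computational_Algebra.Polynomial" "HOL-Library.Cardinality"
begin

definition perm_poly :: "'a::{finite,field} poly \<Rightarrow> bool" where
  "perm_poly f \<longleftrightarrow> bij (poly f)"

text \<open>Compositional inverse, as an induced function on the field (identities of
polynomials are understood modulo x^Q - x, i.e. as functions).\<close>
definition comp_inv :: "'a::{finite,field} poly \<Rightarrow> 'a \<Rightarrow> 'a" where
  "comp_inv f = inv (poly f)"

end

theory Submission
  imports Defs "HOL-Number_Theory.Number_Theory"
begin

lemma fin_field_pow_card:
  fixes x :: "'a::{finite,field}"
  shows "x ^ CARD('a) = x"
proof (cases "x = 0")
  case False
  have "x * (\<Prod>y\<in>UNIV-{0}. x * y) = x * x ^ (card (UNIV :: 'a set) - 1) * \<Prod>(UNIV-{0})"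
    by (simp add: prod.distrib mult_ac)
  also have "x * x ^ (card (UNIV :: 'a set) - 1) = x ^ Suc (card (UNIV :: 'a set) - 1)"
    by (subst power_Suc) auto
  also have "Suc (card (UNIV :: 'a set) - 1) = card (UNIV :: 'a set)"
    using finite_UNIV_card_ge_0[where ?'a = 'a] by simp
  also have "(\<Prod>y\<in>UNIV-{0}. x * y) = (\<Prod>y\<in>UNIV-{0}. y)"
    by (rule prod.reindex_bij_witness[of _ "\<lambda>y. y / x" "\<lambda>y. x * y"]) (use False in auto)
  finally show ?thesis
    by simp
qed (use finite_UNIV_card_ge_0[where ?'a = 'a] in auto)

lemma frob_add:
  fixes x y :: "'a::{finite,field}"
  assumes q_pp: "\<exists>p n. prime p \<and> n > 0 \<and> q = p ^ n"
    and card: "CARD('a) = q ^ 2"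
  shows "(x + y) ^ q = x ^ q + y ^ q"
proof -
  obtain p n where p: "prime p" "n > 0" "q = p ^ n" using q_pp by blast
  have pc: "prime CHAR('a)"
    using prime_CHAR_semidom[where ?'a = 'a] finite_imp_CHAR_pos[where ?'a = 'a] by simp
  have "CHAR('a) dvd p ^ (n * 2)" using CHAR_dvd_CARD[where ?'a='a] card p
    by (simp add: power_mult)
  hence "CHAR('a) dvd p" using pc prime_dvd_power by blast
  hence "CHAR('a) = p" using pc p(1) primes_dvd_imp_eq by blast
  thus ?thesis using freshmans_dream'[OF pc, of q n] p by simp
qed

hide_const (open) UnivPoly.monom Module.module.smult

theorem proposition3p1:
  fixes q k :: nat and b :: "nat \<Rightarrow> 'a::{finite,field}" and s :: "nat \<Rightarrow> nat"
    and \<delta> :: 'a and P1 P2 L :: "'a poly"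
  assumes q_pp: "\<exists>p n. prime p \<and> n > 0 \<and> q = p ^ n"
    and card: "CARD('a) = q ^ 2"
    and k: "k \<ge> 1"
    and s_pos: "\<forall>i\<in>{1..k}. s i > 0"
    and L_def: "L = monom 1 q + [:0, 1:] + [:\<delta>:]"
    and P1_def: "P1 = (\<Sum>i=1..k. smult (b i) (L ^ s i)) - [:0, 1:]"
    and P2_def: "P2 = (\<Sum>i=1..k. smult (b i ^ q) (L ^ (q * s i))) - [:0, 1:]"
  shows "(perm_poly P1 \<longleftrightarrow> perm_poly P2) \<and>
         (perm_poly P1 \<longrightarrow>
            (\<forall>x. comp_inv P1 x + x = (comp_inv P2 x + x) ^ q))"
proof -
  define F :: "'a \<Rightarrow> 'a" where "F x = x ^ q" for x
  have fadd: "F (x + y) = F x + F y" for x y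
    unfolding F_def by (rule frob_add[OF q_pp card])
  have fmin: "F (x - y) = F x - F y" for x y
    using fadd[of "x - y" y] by (simp add: algebra_simps)
  have fsum: "F (\<Sum>i\<in>A. f i) = (\<Sum>i\<in>A. F (f i))" for A and f :: "nat \<Rightarrow> 'a"
  proof (induction A rule: infinite_finite_induct)
    case (infinite A)
    have "q > 0" using q_pp prime_gt_0_nat by auto
    then show ?case using infinite by (simp add: F_def)
  next
    case empty
    have "q > 0" using q_pp prime_gt_0_nat by auto
    then show ?case by (simp add: F_def)
  next
    case (insert x F)
    then show ?case by (simp add: fadd)
  qed
  have ff: "F (F x) = x" for x
    unfolding F_def using fin_field_pow_card[of x] card by (simp add: power_mult power2_eq_square)
  have bijF: "bij F" by (metis ff bij_iff)
  define g where "g x = (\<Sum>i=1..k. b i * (x ^ q + x + \<delta>) ^ s i)" for x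
  have P1e: "poly P1 x = g x - x" for x
    by (simp add: P1_def L_def g_def poly_sum poly_monom)
  have P2e: "poly P2 x = F (g x) - x" for x
  proof -
    have "F (g x) = (\<Sum>i=1..k. F (b i * (x ^ q + x + \<delta>) ^ s i))"
      unfolding g_def by (rule fsum)
    also have "\<dots> = (\<Sum>i=1..k. b i ^ q * (x ^ q + x + \<delta>) ^ (q * s i))"
      proof (rule sum.cong[OF refl])
      fix i
      have "(x ^ q + x + \<delta>) ^ (q * s i) = ((x ^ q + x + \<delta>) ^ s i) ^ q"
        by (metis power_mult mult.commute)
      then show "F (b i * (x ^ q + x + \<delta>) ^ s i) = b i ^ q * (x ^ q + x + \<delta>) ^ (q * s i)"
        by (simp only: F_def power_mult_distrib)
    qed
    finally show ?thesis
      by (simp add: P2_def L_def poly_sum poly_monom)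
  qed
  have gT: "g y = g z" if "y ^ q + y = z ^ q + z" for y z
    unfolding g_def using that by simp
  have gF: "g (F x) = g x" for x
    by (rule gT) (metis ff F_def add.commute)
  have P2P1: "poly P2 = F \<circ> poly P1 \<circ> F"
    by (rule ext) (simp add: P1e P2e fmin gF ff)
  have part1: "perm_poly P1 \<longleftrightarrow> perm_poly P2"
  proof -
    have FF: "F \<circ> F = id" by (rule ext) (simp add: ff)
    have P1P2: "poly P1 = F \<circ> poly P2 \<circ> F"
      unfolding P2P1 by (simp add: o_assoc FF) (simp add: o_assoc[symmetric] FF)
    show ?thesis unfolding perm_poly_def
    proof
      assume "bij (poly P1)" then show "bij (poly P2)"
        unfolding P2P1 by (intro bij_comp bijF)
    next
      assume "bij (poly P2)" then show "bij (poly P1)"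
        unfolding P1P2 by (intro bij_comp bijF)
    qed
  qed
  have part2: "comp_inv P1 x + x = (comp_inv P2 x + x) ^ q" if bp: "perm_poly P1" for x
  proof -
    have b1: "bij (poly P1)" using bp perm_poly_def by auto
    have b2: "bij (poly P2)" using bp part1 perm_poly_def by auto
    define y where "y = comp_inv P1 x"
    have y: "poly P1 y = x" unfolding y_def comp_inv_def using b1 by (simp add: bij_is_surj surj_f_inv_f)
    define z where "z = y + x - F x"
    have Tz: "F z + z = F y + y" unfolding z_def using ff by (simp add: fadd fmin)
    have "poly P1 z = F x"
    proof -
      have gz: "g z = g y" using gT[of z y] Tz by (simp add: F_def)
      have "g y - y = x" using y P1e by simp
      then show ?thesis using gz by (simp add: P1e z_def algebra_simps)
    qed
    hence iz: "comp_inv P1 (F x) = z" using b1 unfolding comp_inv_def by (metis bij_inv_eq_iff)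
    have "poly P2 (F z) = x" using P2P1 \<open>poly P1 z = F x\<close> ff by simp
    hence i2: "comp_inv P2 x = F z" using b2 unfolding comp_inv_def by (metis bij_inv_eq_iff)
    have "(comp_inv P2 x + x) ^ q = F (F z + x)" unfolding i2 F_def ..
    also have "\<dots> = z + F x" by (simp add: fadd ff)
    also have "\<dots> = y + x" by (simp add: z_def)
    finally show ?thesis by (simp add: y_def)
  qed
  show ?thesis using part1 part2 by blast
qed

end
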